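(* Consider the regression setting in which $Z_i = (\bm{X}_i, Y_i)$, $i=1,2,\ldots$, are i.i.d. with $Y_i = F(\bm{X}_i) + \epsilon_i$, where $F$ is a bounded regression function and the errors $\epsilon_i$ are i.i.d., independent of the features, with exponential tails. Let $h_{k}$ ($k\ge1$) be permutation-symmetric kernels, where $h_k(z_1,\ldots,z_k)$ is the prediction at a fixed point $\bm{x}^*$ of a tree built on the training data $z_1,\ldots,z_k$ (so that its value always lies between the minimum and maximum of the training responses). Let $k_n$ be integers with $\lim_{n\to\infty} k_n/\sqrt{n}=0$ and $\lim_{n\to\infty}\zeta_{1,k_n}\neq 0$. Suppose there exists a constant $c$ such that for all $k_n \ge 1$, \[ \big|h((\bm{X}_1,Y_1),\ldots,(\bm{X}_{k_n},Y_{k_n}),(\bm{X}_{k_n+1},Y_{k_n+1})) - h((\bm{X}_1,Y_1),\ldots,(\bm{X}_{k_n},Y_{k_n}),(\bm{X}_{k_n+1},Y^*_{k_n+1}))\big| \le c\,\big|Y_{k_n+1}-Y^*_{k_n+1}\big|, \] where $Y_{k_n+1} = F(\bm{X}_{k_n+1})+\epsilon_{k_n+1}$, $Y^*_{k_n+1} = F(\bm{X}_{k_n+1})+\epsilon^*_{k_n+1}$, and $\epsilon_{k_n+1},\epsilon^*_{k_n+1}$ are i.i.d. with exponential tails. Then Condition 1 is satisfied: for all $\delta>0$, \[ \lim_{n\to\infty}\frac{1}{\zeta_{1,k_n}}\int_{|h_{1,k_n}(Z_1)|\ge \delta\sqrt{n\zeta_{1,k_n}}} h_{1,k_n}^2(Z_1)\,dP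 = 0 . \]
   Context: $\theta_{k} = \mathbb{E}h_{k}(Z_1,\ldots,Z_{k})$; $h_{1,k}(z) = \mathbb{E}h_{k}(z,Z_2,\ldots,Z_k)-\theta_k$; $\zeta_{1,k} = \mathrm{var}(h_{1,k}(Z_1))$, equivalently the covariance of $h_k$ evaluated on two independent samples sharing exactly one argument. A random variable $\epsilon$ has exponential tails if $P(|\epsilon|>t)\le A e^{-\lambda t}$ for some constants $A,\lambda>0$ and all $t\ge0$. *)

theory Defs
  imports "HOL-Probability.Probability"
begin

definition PZ :: "'x measure \<Rightarrow> real measure \<Rightarrow> ('x \<Rightarrow> real) \<Rightarrow> ('x \<times> real) measure" where
  "PZ PX Pe F = distr (PX \<Otimes>\<^sub>M Pe) (PX \<Otimes>\<^sub>M borel) (\<lambda>(x, e). (x, F x + e))"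

text \<open>Samples z_1..z_k are functions on {..<k} (index i stands for z_(i+1)).
  theta_k = E h_k(Z_1,...,Z_k).\<close>
definition theta :: "(nat \<Rightarrow> (nat \<Rightarrow> 'x \<times> real) \<Rightarrow> real) \<Rightarrow> 'x measure \<Rightarrow> real measure
    \<Rightarrow> ('x \<Rightarrow> real) \<Rightarrow> nat \<Rightarrow> real" where
  "theta h PX Pe F k = (\<integral>z. h k z \<partial>(PiM {..<k} (\<lambda>_. PZ PX Pe F)))"

definition h1 :: "(nat \<Rightarrow> (nat \<Rightarrow> 'x \<times> real) \<Rightarrow> real) \<Rightarrow> 'x measure \<Rightarrow> real measure
    \<Rightarrow> ('x \<Rightarrow> real) \<Rightarrow> nat \<Rightarrow> 'x \<times> real \<Rightarrow> real" where
  "h1 h PX Pe F k z1 = (\<integral>z. h k (z(0 := z1)) \<partial>(PiM {1..<k} (\<lambda>_. PZ PX Pe F))) - theta h PX Pe F k"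

definition zeta1 :: "(nat \<Rightarrow> (nat \<Rightarrow> 'x \<times> real) \<Rightarrow> real) \<Rightarrow> 'x measure \<Rightarrow> real measure
    \<Rightarrow> ('x \<Rightarrow> real) \<Rightarrow> nat \<Rightarrow> real" where
  "zeta1 h PX Pe F k =
     (\<integral>z. (h1 h PX Pe F k z - (\<integral>w. h1 h PX Pe F k w \<partial>(PZ PX Pe F)))\<^sup>2 \<partial>(PZ PX Pe F))"

definition exp_tails :: "real measure \<Rightarrow> bool" where
  "exp_tails P \<longleftrightarrow> (\<exists>A lam. A > 0 \<and> lam > 0 \<and>
      (\<forall>t\<ge>0. measure P {e. \<bar>e\<bar> > t} \<le> A * exp (- lam * t)))"

end

theory Submission
  imports Defs
begin

lemma tail_bound:
  assumes P: "prob_space Pe" and S: "sets Pe = sets borel"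
    and A: "A > 0" and lam: "lam > 0"
    and T: "\<forall>t\<ge>0. measure Pe {e. \<bar>e\<bar> > t} \<le> A * exp (- lam * t)"
  shows "measure Pe {e. real n \<le> \<bar>e\<bar>} \<le> max 1 (A * exp lam) * exp (- lam * real n)"
proof (cases "n = 0")
  case True
  have "measure Pe {e. real n \<le> \<bar>e\<bar>} \<le> 1" using prob_space.prob_le_1[OF P] .
  then show ?thesis using True by (simp add: le_max_iff_disj)
next
  case False
  interpret prob_space Pe by fact
  have "measure Pe {e. real n \<le> \<bar>e\<bar>} \<le> measure Pe {e. \<bar>e\<bar> > real n - 1}"
    by (rule finite_measure_mono) (auto simp: S)
  also have "\<dots> \<le> A * exp (- lam * (real n - 1))" using T False by auto
  also have "\<dots> = A * exp lam * exp (- lam * real n)" by (simp add: algebra_simps flip: exp_add)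
  also have "\<dots> \<le> max 1 (A * exp lam) * exp (- lam * real n)"
    by (intro mult_right_mono) auto
  finally show ?thesis .
qed

lemma exp_moment:
  assumes P: "prob_space Pe" and S: "sets Pe = sets borel" and tails: "exp_tails Pe"
  shows "\<exists>\<nu>>0. (\<integral>\<^sup>+e. ennreal (exp (\<nu> * \<bar>e\<bar>)) \<partial>Pe) < \<infinity>"
proof -
  interpret prob_space Pe by fact
  obtain A lam where A: "A > 0" and lam: "lam > 0" and
    T: "\<forall>t\<ge>0. measure Pe {e. \<bar>e\<bar> > t} \<le> A * exp (- lam * t)"
    using tails unfolding exp_tails_def by blast
  define \<nu> where "\<nu> = lam / 2"
  define A' where "A' = max 1 (A * exp lam)"
  have \<nu>: "\<nu> > 0" using lam by (simp add: \<nu>_def)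
  define c where "c n = exp (\<nu> * (real n + 1)) * A' * exp (- lam * real n)" for n :: nat
  have c_eq: "c n = A' * exp \<nu> * (exp (- \<nu>)) ^ n" for n
  proof -
    have "exp (\<nu> * (real n + 1)) * exp (- lam * real n) = exp \<nu> * exp (- \<nu> * real n)"
      unfolding \<nu>_def by (simp flip: exp_add; simp add: field_simps)
    also have "\<dots> = exp \<nu> * (exp (- \<nu>)) ^ n" by (simp add: exp_of_nat_mult[symmetric] mult.commute)
    finally show ?thesis unfolding c_def by (simp add: algebra_simps)
  qed
  have summ: "summable c"
    unfolding c_eq using \<nu> by (intro summable_mult summable_geometric) auto
  have pw: "ennreal (exp (\<nu> * \<bar>e\<bar>)) \<le> (\<Sum>n. ennreal (exp (\<nu> * (real n + 1))) * indicator {e. real n \<le> \<bar>e\<bar>} e)" for e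
  proof -
    define N where "N = nat \<lfloor>\<bar>e\<bar>\<rfloor>"
    have "real N \<le> \<bar>e\<bar>" "\<bar>e\<bar> \<le> real N + 1" unfolding N_def
      using of_int_floor_le[of "\<bar>e\<bar>"] real_of_int_floor_add_one_ge[of "\<bar>e\<bar>"] by auto
    then have "ennreal (exp (\<nu> * \<bar>e\<bar>)) \<le> ennreal (exp (\<nu> * (real N + 1))) * indicator {e. real N \<le> \<bar>e\<bar>} e"
      using \<nu> by (simp add: ennreal_leI)
    also have "\<dots> \<le> (\<Sum>n. ennreal (exp (\<nu> * (real n + 1))) * indicator {e. real n \<le> \<bar>e\<bar>} e)"
    proof -
      let ?f = "\<lambda>n. ennreal (exp (\<nu> * (real n + 1))) * indicator {e. real n \<le> \<bar>e\<bar>} e"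
      have "sum ?f {N} \<le> suminf ?f" by (rule sum_le_suminf[OF summableI]) auto
      moreover have "sum ?f {N} = ?f N" by (simp only: sum.insert[OF finite.emptyI empty_iff[THEN iffD1, THEN notI]] sum.empty add_0_right)
      ultimately show ?thesis by simp
    qed
    finally show ?thesis .
  qed
  have "(\<integral>\<^sup>+e. ennreal (exp (\<nu> * \<bar>e\<bar>)) \<partial>Pe) \<le>
      (\<integral>\<^sup>+e. (\<Sum>n. ennreal (exp (\<nu> * (real n + 1))) * indicator {e. real n \<le> \<bar>e\<bar>} e) \<partial>Pe)"
    by (intro nn_integral_mono pw)
  also have "\<dots> = (\<Sum>n. \<integral>\<^sup>+e. ennreal (exp (\<nu> * (real n + 1))) * indicator {e. real n \<le> \<bar>e\<bar>} e \<partial>Pe)"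
    using measurable_cong_sets[OF S refl, of "borel :: ennreal measure"]
    by (intro nn_integral_suminf) auto
  also have "\<dots> = (\<Sum>n. ennreal (exp (\<nu> * (real n + 1))) * emeasure Pe {e. real n \<le> \<bar>e\<bar>})"
    by (subst nn_integral_cmult_indicator) (auto simp: S)
  also have "\<dots> \<le> (\<Sum>n. ennreal (c n))"
  proof (intro suminf_le summableI)
    fix n
    have "emeasure Pe {e. real n \<le> \<bar>e\<bar>} = ennreal (measure Pe {e. real n \<le> \<bar>e\<bar>})"
      by (simp add: emeasure_eq_measure)
    also have "\<dots> \<le> ennreal (A' * exp (- lam * real n))"
      unfolding A'_def by (intro ennreal_leI tail_bound[OF P S A lam T])
    finally show "ennreal (exp (\<nu> * (real n + 1))) * emeasure Pe {e. real n \<le> \<bar>e\<bar>} \<le> ennreal (c n)"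
      unfolding c_def mult.assoc
      by (subst ennreal_mult) (auto simp: A'_def intro: mult_left_mono)
  qed
  also have "\<dots> = ennreal (suminf c)"
    using summ \<nu> by (intro suminf_ennreal2) (auto simp: c_eq A'_def)
  finally show ?thesis using \<nu> by (auto simp: top_unique intro!: exI[of _ \<nu>] ennreal_less_top dest: le_less_trans[OF _ ennreal_less_top])
qed

lemma PZ_map_meas:
  fixes Pe :: "real measure"
  assumes S: "sets Pe = sets borel" and F: "F \<in> borel_measurable PX"
  shows "(\<lambda>(x, e). (x, F x + e)) \<in> measurable (PX \<Otimes>\<^sub>M Pe) (PX \<Otimes>\<^sub>M borel)"
proof -
  have "(\<lambda>(x, e::real). (x, F x + e)) \<in> measurable (PX \<Otimes>\<^sub>M borel) (PX \<Otimes>\<^sub>M (borel :: real measure))"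
    using F by measurable
  then show ?thesis
    by (subst measurable_cong_sets[OF sets_pair_measure_cong[OF refl S] refl])
qed

lemma PZ_prob:
  assumes PX: "prob_space PX" and Pe: "prob_space Pe" and S: "sets Pe = sets borel"
    and F: "F \<in> borel_measurable PX"
  shows "prob_space (PZ PX Pe F)"
proof -
  interpret PX: prob_space PX by fact
  interpret Pe: prob_space Pe by fact
  interpret pair_prob_space PX Pe by unfold_locales
  show ?thesis unfolding PZ_def
    by (intro prob_space_distr PZ_map_meas S F)
qed

lemma sets_PZ: "sets (PZ PX Pe F) = sets (PX \<Otimes>\<^sub>M borel)"
  by (simp add: PZ_def)

lemma PZ_nn_bound:
  assumes PX: "prob_space PX" and Pe: "prob_space Pe" and S: "sets Pe = sets borel"
    and F: "F \<in> borel_measurable PX"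
    and g: "g \<in> borel_measurable (borel :: real measure)"
    and G: "G \<in> borel_measurable (borel :: real measure)"
    and le: "\<And>x e. g (F x + e) \<le> G e"
  shows "(\<integral>\<^sup>+z. g (snd z) \<partial>PZ PX Pe F) \<le> (\<integral>\<^sup>+e. G e \<partial>Pe)"
proof -
  interpret PX: prob_space PX by fact
  interpret Pe: prob_space Pe by fact
  interpret pair_prob_space PX Pe by unfold_locales
  have Gm: "G \<in> borel_measurable Pe" using G measurable_cong_sets[OF S refl, of "borel :: ennreal measure"] by simp
  have "(\<integral>\<^sup>+z. g (snd z) \<partial>PZ PX Pe F) = (\<integral>\<^sup>+p. g (snd ((\<lambda>(x, e). (x, F x + e)) p)) \<partial>(PX \<Otimes>\<^sub>M Pe))"
    unfolding PZ_def using g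
    by (intro nn_integral_distr PZ_map_meas S F measurable_compose[OF measurable_snd g]) (simp add: measurable_distr_eq1)
  also have "\<dots> \<le> (\<integral>\<^sup>+p. G (snd p) \<partial>(PX \<Otimes>\<^sub>M Pe))"
    by (intro nn_integral_mono) (auto simp: le split: prod.splits)
  also have "\<dots> = (\<integral>\<^sup>+x. \<integral>\<^sup>+e. G e \<partial>Pe \<partial>PX)"
    using Gm by (subst Pe.nn_integral_fst[symmetric]) auto
  also have "\<dots> = (\<integral>\<^sup>+e. G e \<partial>Pe)" by (simp add: PX.emeasure_space_1)
  finally show ?thesis .
qed

lemma PiM_comp_nn:
  assumes P: "prob_space M" and i: "i \<in> I"
    and f: "f \<in> borel_measurable M"
  shows "(\<integral>\<^sup>+z. f (z i) \<partial>PiM I (\<lambda>_. M)) = (\<integral>\<^sup>+w. f w \<partial>M)"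
proof -
  have "(\<integral>\<^sup>+w. f w \<partial>M) = (\<integral>\<^sup>+w. f w \<partial>distr (PiM I (\<lambda>_. M)) M (\<lambda>\<omega>. \<omega> i))"
    using distr_PiM_component[of I "\<lambda>_. M" i] P i by simp
  also have "\<dots> = (\<integral>\<^sup>+z. f (z i) \<partial>PiM I (\<lambda>_. M))"
    using f i by (intro nn_integral_distr) auto
  finally show ?thesis by simp
qed


lemma abs_h_bound:
  fixes h :: "nat \<Rightarrow> (nat \<Rightarrow> 'x \<times> real) \<Rightarrow> real"
  assumes h_tree: "\<And>k z. k \<ge> 1 \<Longrightarrow> z \<in> extensional {..<k} \<Longrightarrow>
        Min ((\<lambda>i. snd (z i)) ` {..<k}) \<le> h k z \<and> h k z \<le> Max ((\<lambda>i. snd (z i)) ` {..<k})"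
    and k: "k \<ge> 1" and w: "w \<in> extensional {..<k}"
  shows "\<bar>h k w\<bar> \<le> (\<Sum>i<k. \<bar>snd (w i)\<bar>)"
proof -
  have "0 \<in> {..<k}" using k by auto
  then have ne: "(\<lambda>i. snd (w i)) ` {..<k} \<noteq> {}" by blast
  obtain j where j: "j < k" "Max ((\<lambda>i. snd (w i)) ` {..<k}) = snd (w j)"
    using Max_in[OF finite_imageI[OF finite_lessThan] ne] by auto
  obtain j' where j': "j' < k" "Min ((\<lambda>i. snd (w i)) ` {..<k}) = snd (w j')"
    using Min_in[OF finite_imageI[OF finite_lessThan] ne] by auto
  have s1: "\<bar>snd (w j)\<bar> \<le> (\<Sum>i<k. \<bar>snd (w i)\<bar>)"
    using j by (intro member_le_sum) auto
  have s2: "\<bar>snd (w j')\<bar> \<le> (\<Sum>i<k. \<bar>snd (w i)\<bar>)"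
    using j' by (intro member_le_sum) auto
  show ?thesis using h_tree[OF k w] j j' s1 s2 by linarith
qed

lemma abs_integral_le_nn:
  fixes f :: "'a \<Rightarrow> real"
  assumes "(\<integral>\<^sup>+x. ennreal \<bar>f x\<bar> \<partial>M) \<le> ennreal c" and "0 \<le> c"
  shows "\<bar>integral\<^sup>L M f\<bar> \<le> c"
proof (cases "integrable M f")
  case True
  have "ennreal \<bar>integral\<^sup>L M f\<bar> \<le> (\<integral>\<^sup>+x. ennreal \<bar>f x\<bar> \<partial>M)"
    using integral_norm_bound_ennreal[OF True] by simp
  also have "\<dots> \<le> ennreal c" by fact
  finally show ?thesis using assms(2) by (simp add: ennreal_le_iff)
next
  case False
  then show ?thesis using assms(2) by (simp add: not_integrable_integral_eq)
qed

lemma snd_meas_PZ: "(\<lambda>w. ennreal \<bar>snd w\<bar>) \<in> borel_measurable (PZ PX Pe F)"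
  by (subst measurable_cong_sets[OF sets_PZ refl]) measurable

lemma PiM_sum_nn:
  assumes P: "prob_space (PZ PX Pe F)" and m: "(\<integral>\<^sup>+w. ennreal \<bar>snd w\<bar> \<partial>PZ PX Pe F) = ennreal mr"
    and "finite I"
  shows "(\<integral>\<^sup>+z. (\<Sum>i\<in>I. ennreal \<bar>snd (z i)\<bar>) \<partial>PiM I (\<lambda>_. PZ PX Pe F)) = ennreal (real (card I) * mr)"
proof -
  have "(\<integral>\<^sup>+z. (\<Sum>i\<in>I. ennreal \<bar>snd (z i)\<bar>) \<partial>PiM I (\<lambda>_. PZ PX Pe F))
      = (\<Sum>i\<in>I. \<integral>\<^sup>+z. ennreal \<bar>snd (z i)\<bar> \<partial>PiM I (\<lambda>_. PZ PX Pe F))"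
  proof (intro nn_integral_sum)
    fix i assume "i \<in> I"
    then show "(\<lambda>z. ennreal \<bar>snd (z i)\<bar>) \<in> borel_measurable (PiM I (\<lambda>_. PZ PX Pe F))"
      using measurable_compose[OF measurable_component_singleton[of i I "\<lambda>_. PZ PX Pe F"] snd_meas_PZ] by simp
  qed
  also have "\<dots> = (\<Sum>i\<in>I. ennreal mr)"
    by (intro sum.cong refl) (simp add: PiM_comp_nn[OF P _ snd_meas_PZ] m)
  also have "\<dots> = ennreal (real (card I) * mr)"
    by (simp add: ennreal_of_nat_eq_real_of_nat ennreal_mult'[symmetric])
  finally show ?thesis .
qed


lemma h1_bound:
  fixes h :: "nat \<Rightarrow> (nat \<Rightarrow> 'x \<times> real) \<Rightarrow> real"
  assumes P: "prob_space (PZ PX Pe F)"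
    and m: "(\<integral>\<^sup>+w. ennreal \<bar>snd w\<bar> \<partial>PZ PX Pe F) = ennreal mr" and mr: "0 \<le> mr"
    and h_tree: "\<And>k z. k \<ge> 1 \<Longrightarrow> z \<in> extensional {..<k} \<Longrightarrow>
        Min ((\<lambda>i. snd (z i)) ` {..<k}) \<le> h k z \<and> h k z \<le> Max ((\<lambda>i. snd (z i)) ` {..<k})"
    and k: "k \<ge> 1"
  shows "\<bar>h1 h PX Pe F k z1\<bar> \<le> \<bar>snd z1\<bar> + 2 * real k * mr"
proof -
  let ?Q = "PiM {1..<k} (\<lambda>_. PZ PX Pe F)"
  let ?R = "PiM {..<k} (\<lambda>_. PZ PX Pe F)"
  interpret Q: prob_space ?Q by (intro prob_space_PiM P)
  have A: "\<bar>\<integral>z. h k (z(0 := z1)) \<partial>?Q\<bar> \<le> \<bar>snd z1\<bar> + real (k - 1) * mr"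
  proof (rule abs_integral_le_nn)
    have "(\<integral>\<^sup>+z. ennreal \<bar>h k (z(0 := z1))\<bar> \<partial>?Q) \<le>
        (\<integral>\<^sup>+z. ennreal \<bar>snd z1\<bar> + (\<Sum>i\<in>{1..<k}. ennreal \<bar>snd (z i)\<bar>) \<partial>?Q)"
    proof (intro nn_integral_mono)
      fix z assume z: "z \<in> space ?Q"
      then have ze: "z \<in> extensional {1..<k}" by (simp add: space_PiM PiE_def)
      have we: "z(0 := z1) \<in> extensional {..<k}"
        using ze k by (auto simp: extensional_def)
      have split: "{..<k} = insert 0 {1..<k}" using k by auto
      have "\<bar>h k (z(0 := z1))\<bar> \<le> (\<Sum>i<k. \<bar>snd ((z(0 := z1)) i)\<bar>)"
        by (rule abs_h_bound[OF h_tree k we])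
      also have "\<dots> = \<bar>snd z1\<bar> + (\<Sum>i\<in>{1..<k}. \<bar>snd (z i)\<bar>)"
        unfolding split by (subst sum.insert) (auto intro!: sum.cong)
      finally show "ennreal \<bar>h k (z(0 := z1))\<bar> \<le> ennreal \<bar>snd z1\<bar> + (\<Sum>i\<in>{1..<k}. ennreal \<bar>snd (z i)\<bar>)"
        by (simp add: ennreal_plus[symmetric] sum_nonneg ennreal_leI del: ennreal_plus)
    qed
    also have "\<dots> = (\<integral>\<^sup>+z. ennreal \<bar>snd z1\<bar> \<partial>?Q) + (\<integral>\<^sup>+z. (\<Sum>i\<in>{1..<k}. ennreal \<bar>snd (z i)\<bar>) \<partial>?Q)"
    proof (rule nn_integral_add)
      show "(\<lambda>z. \<Sum>i\<in>{1..<k}. ennreal \<bar>snd (z i)\<bar>) \<in> borel_measurable ?Q"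
      proof (intro borel_measurable_sum)
        fix i assume "i \<in> {1..<k}"
        then show "(\<lambda>z. ennreal \<bar>snd (z i)\<bar>) \<in> borel_measurable ?Q"
          using measurable_compose[OF measurable_component_singleton[of i "{1..<k}" "\<lambda>_. PZ PX Pe F"] snd_meas_PZ] by simp
      qed
    qed simp
    also have "\<dots> = ennreal \<bar>snd z1\<bar> + ennreal (real (card {1..<k}) * mr)"
      by (simp only: PiM_sum_nn[OF P m] finite_atLeastLessThan nn_integral_const Q.emeasure_space_1 mult_1_right)
    also have "\<dots> = ennreal (\<bar>snd z1\<bar> + real (k - 1) * mr)"
      using mr by (simp add: ennreal_plus[symmetric] del: ennreal_plus)
    finally show "(\<integral>\<^sup>+z. ennreal \<bar>h k (z(0 := z1))\<bar> \<partial>?Q) \<le> ennreal (\<bar>snd z1\<bar> + real (k - 1) * mr)" .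
  qed (use mr in simp)
  interpret R: prob_space ?R by (intro prob_space_PiM P)
  have B: "\<bar>theta h PX Pe F k\<bar> \<le> real k * mr"
    unfolding theta_def
  proof (rule abs_integral_le_nn)
    have "(\<integral>\<^sup>+z. ennreal \<bar>h k z\<bar> \<partial>?R) \<le> (\<integral>\<^sup>+z. (\<Sum>i\<in>{..<k}. ennreal \<bar>snd (z i)\<bar>) \<partial>?R)"
    proof (intro nn_integral_mono)
      fix z assume z: "z \<in> space ?R"
      then have ze: "z \<in> extensional {..<k}" by (simp add: space_PiM PiE_def)
      show "ennreal \<bar>h k z\<bar> \<le> (\<Sum>i\<in>{..<k}. ennreal \<bar>snd (z i)\<bar>)"
        using abs_h_bound[OF h_tree k ze] by (simp add: ennreal_leI sum_nonneg)
    qed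
    also have "\<dots> = ennreal (real k * mr)"
      by (simp only: PiM_sum_nn[OF P m] finite_lessThan card_lessThan)
    finally show "(\<integral>\<^sup>+z. ennreal \<bar>h k z\<bar> \<partial>?R) \<le> ennreal (real k * mr)" .
  qed (use mr in simp)
  have "\<bar>h1 h PX Pe F k z1\<bar> \<le> \<bar>snd z1\<bar> + real (k - 1) * mr + real k * mr"
    unfolding h1_def using A B by linarith
  also have "\<dots> \<le> \<bar>snd z1\<bar> + 2 * real k * mr"
    using mr k by (simp add: of_nat_diff algebra_simps mult_right_mono)
  finally show ?thesis .
qed


lemma pw_tail:
  fixes y e Bb \<nu> s :: real
  assumes yb: "\<bar>y\<bar> \<le> Bb + \<bar>e\<bar>" and Bb: "0 \<le> Bb" and \<nu>: "0 < \<nu>"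
  shows "4 * indicator {y. s \<le> \<bar>y\<bar>} y * y\<^sup>2 \<le>
     4 * (Bb + 4 / \<nu>)\<^sup>2 * exp (\<nu> / 2 * Bb) * exp (- (\<nu> / 2) * s) * exp (\<nu> * \<bar>e\<bar>)"
proof (cases "s \<le> \<bar>y\<bar>")
  case False then show ?thesis by simp
next
  case True
  have y2: "y\<^sup>2 \<le> (Bb + \<bar>e\<bar>)\<^sup>2"
    using yb by (metis abs_ge_zero power2_abs power_mono)
  have ex: "1 + \<nu> / 4 * \<bar>e\<bar> \<le> exp (\<nu> / 4 * \<bar>e\<bar>)" by (rule exp_ge_add_one_self)
  have "Bb + \<bar>e\<bar> \<le> (Bb + 4 / \<nu>) * (1 + \<nu> / 4 * \<bar>e\<bar>)"
    using \<nu> Bb by (simp add: field_simps)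
  also have "\<dots> \<le> (Bb + 4 / \<nu>) * exp (\<nu> / 4 * \<bar>e\<bar>)"
    using ex \<nu> Bb by (intro mult_left_mono) auto
  finally have lin: "Bb + \<bar>e\<bar> \<le> (Bb + 4 / \<nu>) * exp (\<nu> / 4 * \<bar>e\<bar>)" .
  have "(Bb + \<bar>e\<bar>)\<^sup>2 \<le> ((Bb + 4 / \<nu>) * exp (\<nu> / 4 * \<bar>e\<bar>))\<^sup>2"
    using lin Bb by (intro power_mono) auto
  also have "\<dots> = (Bb + 4 / \<nu>)\<^sup>2 * exp (\<nu> / 2 * \<bar>e\<bar>)"
    by (simp add: power_mult_distrib power2_eq_square flip: exp_add)
  finally have sq: "y\<^sup>2 \<le> (Bb + 4 / \<nu>)\<^sup>2 * exp (\<nu> / 2 * \<bar>e\<bar>)" using y2 by linarith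
  have one: "1 \<le> exp (\<nu> / 2 * (\<bar>e\<bar> - s + Bb))"
    using True yb \<nu> by (intro one_le_exp_iff[THEN iffD2] mult_nonneg_nonneg) auto
  have "y\<^sup>2 \<le> (Bb + 4 / \<nu>)\<^sup>2 * exp (\<nu> / 2 * \<bar>e\<bar>) * exp (\<nu> / 2 * (\<bar>e\<bar> - s + Bb))"
    using sq one by (metis mult_mono mult.right_neutral exp_ge_zero mult_nonneg_nonneg zero_le_power2 zero_le_one order_trans)
  also have "\<dots> = (Bb + 4 / \<nu>)\<^sup>2 * exp (\<nu> / 2 * Bb) * exp (- (\<nu> / 2) * s) * exp (\<nu> * \<bar>e\<bar>)"
    by (simp add: mult.assoc flip: exp_add) (simp add: field_simps)
  finally show ?thesis using True by simp
qed

lemma tail_PZ: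
  assumes PX: "prob_space PX" and Pe: "prob_space Pe" and S: "sets Pe = sets borel"
    and F: "F \<in> borel_measurable PX" and Bb: "\<And>x. \<bar>F x\<bar> \<le> Bb" "0 \<le> Bb" and \<nu>: "0 < \<nu>"
    and I: "(\<integral>\<^sup>+e. ennreal (exp (\<nu> * \<bar>e\<bar>)) \<partial>Pe) = ennreal Ir" and Ir: "0 \<le> Ir"
  shows "(\<integral>\<^sup>+z. ennreal (4 * indicator {y. s \<le> \<bar>y\<bar>} (snd z) * (snd z)\<^sup>2) \<partial>PZ PX Pe F)
     \<le> ennreal (4 * (Bb + 4 / \<nu>)\<^sup>2 * exp (\<nu> / 2 * Bb) * exp (- (\<nu> / 2) * s) * Ir)"
proof -
  let ?K = "4 * (Bb + 4 / \<nu>)\<^sup>2 * exp (\<nu> / 2 * Bb) * exp (- (\<nu> / 2) * s)"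
  have "(\<integral>\<^sup>+z. ennreal (4 * indicator {y. s \<le> \<bar>y\<bar>} (snd z) * (snd z)\<^sup>2) \<partial>PZ PX Pe F)
     \<le> (\<integral>\<^sup>+e. ennreal (?K * exp (\<nu> * \<bar>e\<bar>)) \<partial>Pe)"
  proof (rule PZ_nn_bound[OF PX Pe S F, where g = "\<lambda>y. ennreal (4 * indicator {y. s \<le> \<bar>y\<bar>} y * y\<^sup>2)"])
    fix x e
    have "\<bar>F x + e\<bar> \<le> Bb + \<bar>e\<bar>" using Bb(1)[of x] by linarith
    then show "ennreal (4 * indicator {y. s \<le> \<bar>y\<bar>} (F x + e) * (F x + e)\<^sup>2) \<le> ennreal (?K * exp (\<nu> * \<bar>e\<bar>))"
      by (intro ennreal_leI pw_tail Bb \<nu>)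
  qed measurable
  also have "\<dots> = ennreal ?K * (\<integral>\<^sup>+e. ennreal (exp (\<nu> * \<bar>e\<bar>)) \<partial>Pe)"
  proof -
    have Gm: "(\<lambda>e. ennreal (exp (\<nu> * \<bar>e\<bar>))) \<in> borel_measurable Pe"
      by (subst measurable_cong_sets[OF S refl]) measurable
    have "(\<integral>\<^sup>+e. ennreal (?K * exp (\<nu> * \<bar>e\<bar>)) \<partial>Pe) = (\<integral>\<^sup>+e. ennreal ?K * ennreal (exp (\<nu> * \<bar>e\<bar>)) \<partial>Pe)"
      by (intro nn_integral_cong ennreal_mult) auto
    also have "\<dots> = ennreal ?K * (\<integral>\<^sup>+e. ennreal (exp (\<nu> * \<bar>e\<bar>)) \<partial>Pe)"
      by (rule nn_integral_cmult[OF Gm])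
    finally show ?thesis .
  qed
  also have "\<dots> = ennreal (?K * Ir)"
    unfolding I using Ir by (intro ennreal_mult[symmetric]) auto
  finally show ?thesis .
qed


lemma exp_sqrt_lim:
  assumes "c0 > (0::real)"
  shows "(\<lambda>n. C * exp (- (c0 * sqrt (real n)))) \<longlonglongrightarrow> 0"
proof -
  have "filterlim (\<lambda>n. c0 * sqrt (real n)) at_top sequentially"
    by (rule filterlim_tendsto_pos_mult_at_top[OF tendsto_const assms]
        filterlim_compose[OF sqrt_at_top filterlim_real_sequentially])+
  then have "filterlim (\<lambda>n. - (c0 * sqrt (real n))) at_bot sequentially"
    by (rule filterlim_compose[OF filterlim_uminus_at_bot_at_top])
  then have "(\<lambda>n. exp (- (c0 * sqrt (real n)))) \<longlonglongrightarrow> 0"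
    by (rule filterlim_compose[OF exp_at_bot])
  then show ?thesis by (intro tendsto_mult_right_zero)
qed

theorem proposition1:
  fixes PX :: "'x measure" and Pe :: "real measure" and F :: "'x \<Rightarrow> real"
    and h :: "nat \<Rightarrow> (nat \<Rightarrow> 'x \<times> real) \<Rightarrow> real" and kn :: "nat \<Rightarrow> nat" and c :: real
  assumes PX: "prob_space PX"
    and Pe: "prob_space Pe" "sets Pe = sets borel"
    and F_meas: "F \<in> borel_measurable PX"
    and F_bdd: "\<exists>B. \<forall>x. \<bar>F x\<bar> \<le> B"
    and tails: "exp_tails Pe"
    and h_meas: "\<And>k. h k \<in> borel_measurable (PiM {..<k} (\<lambda>_. PX \<Otimes>\<^sub>M (borel :: real measure)))"
    and h_sym: "\<And>k z \<sigma>. z \<in> extensional {..<k} \<Longrightarrow> \<sigma> permutes {..<k} \<Longrightarrow> h k (z \<circ> \<sigma>) = h k z"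
    and h_tree: "\<And>k z. k \<ge> 1 \<Longrightarrow> z \<in> extensional {..<k} \<Longrightarrow>
        Min ((\<lambda>i. snd (z i)) ` {..<k}) \<le> h k z \<and> h k z \<le> Max ((\<lambda>i. snd (z i)) ` {..<k})"
    and kn_pos: "\<And>n. kn n \<ge> 1"
    and kn_rate: "(\<lambda>n. real (kn n) / sqrt (real n)) \<longlonglongrightarrow> 0"
    and zeta_lim: "\<exists>L. L \<noteq> 0 \<and> (\<lambda>n. zeta1 h PX Pe F (kn n)) \<longlonglongrightarrow> L"
    and lipschitz: "\<And>n. AE w in (PiM {..<kn n} (\<lambda>_. PZ PX Pe F) \<Otimes>\<^sub>M PX) \<Otimes>\<^sub>M (Pe \<Otimes>\<^sub>M Pe).
        (case w of ((z, x), (e, e')) \<Rightarrow>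
          \<bar>h (kn n + 1) (z(kn n := (x, F x + e))) - h (kn n + 1) (z(kn n := (x, F x + e')))\<bar>
            \<le> c * \<bar>(F x + e) - (F x + e')\<bar>)"
  shows "\<forall>\<delta>>0. (\<lambda>n. (1 / zeta1 h PX Pe F (kn n)) *
      (\<integral>z. indicator {z. \<bar>h1 h PX Pe F (kn n) z\<bar> \<ge> \<delta> * sqrt (real n * zeta1 h PX Pe F (kn n))} z
            * (h1 h PX Pe F (kn n) z)\<^sup>2 \<partial>(PZ PX Pe F))) \<longlonglongrightarrow> 0"
proof -
  interpret PX: prob_space PX by fact
  interpret Pe: prob_space Pe by fact
  have P: "prob_space (PZ PX Pe F)" by (rule PZ_prob[OF PX Pe F_meas])
  obtain Bb0 where Bb0: "\<And>x. \<bar>F x\<bar> \<le> Bb0" using F_bdd by blast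
  define Bb where "Bb = max Bb0 0"
  have Bb: "\<And>x. \<bar>F x\<bar> \<le> Bb" "0 \<le> Bb" unfolding Bb_def using Bb0 by (auto simp: le_max_iff_disj)
  obtain \<nu> where \<nu>: "\<nu> > 0" and Ilt: "(\<integral>\<^sup>+e. ennreal (exp (\<nu> * \<bar>e\<bar>)) \<partial>Pe) < \<infinity>"
    using exp_moment[OF Pe tails] by blast
  define Ir where "Ir = enn2real (\<integral>\<^sup>+e. ennreal (exp (\<nu> * \<bar>e\<bar>)) \<partial>Pe)"
  have I: "(\<integral>\<^sup>+e. ennreal (exp (\<nu> * \<bar>e\<bar>)) \<partial>Pe) = ennreal Ir" and Ir: "0 \<le> Ir"
    using Ilt unfolding Ir_def by (auto simp: ennreal_enn2real_if)
  have Gm: "(\<lambda>e. ennreal (exp (\<nu> * \<bar>e\<bar>))) \<in> borel_measurable Pe"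
    by (subst measurable_cong_sets[OF Pe(2) refl]) measurable
  have "(\<integral>\<^sup>+w. ennreal \<bar>snd w\<bar> \<partial>PZ PX Pe F) \<le> (\<integral>\<^sup>+e. ennreal Bb + ennreal (1 / \<nu>) * ennreal (exp (\<nu> * \<bar>e\<bar>)) \<partial>Pe)"
  proof (rule PZ_nn_bound[OF PX Pe F_meas, where g = "\<lambda>y. ennreal \<bar>y\<bar>"])
    fix x e
    have "\<nu> * \<bar>e\<bar> \<le> exp (\<nu> * \<bar>e\<bar>)" using exp_ge_add_one_self[of "\<nu> * \<bar>e\<bar>"] by linarith
    then have "\<bar>e\<bar> \<le> 1 / \<nu> * exp (\<nu> * \<bar>e\<bar>)" using \<nu> by (simp add: field_simps)
    then have "\<bar>F x + e\<bar> \<le> Bb + 1 / \<nu> * exp (\<nu> * \<bar>e\<bar>)" using Bb(1)[of x] by linarith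
    then show "ennreal \<bar>F x + e\<bar> \<le> ennreal Bb + ennreal (1 / \<nu>) * ennreal (exp (\<nu> * \<bar>e\<bar>))"
      using \<nu> Bb(2) by (simp add: ennreal_plus[symmetric] ennreal_mult[symmetric] ennreal_leI del: ennreal_plus)
  qed measurable
  also have "\<dots> = ennreal Bb + ennreal (1 / \<nu>) * ennreal Ir"
    using Gm by (simp add: nn_integral_add nn_integral_cmult I Pe.emeasure_space_1)
  also have "\<dots> < \<infinity>" by (simp add: ennreal_mult_less_top)
  finally have mlt: "(\<integral>\<^sup>+w. ennreal \<bar>snd w\<bar> \<partial>PZ PX Pe F) < \<infinity>" .
  define mr where "mr = enn2real (\<integral>\<^sup>+w. ennreal \<bar>snd w\<bar> \<partial>PZ PX Pe F)"
  have m: "(\<integral>\<^sup>+w. ennreal \<bar>snd w\<bar> \<partial>PZ PX Pe F) = ennreal mr" and mr: "0 \<le> mr"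
    using mlt unfolding mr_def by (auto simp: ennreal_enn2real_if)
  have zeta_nn: "0 \<le> zeta1 h PX Pe F k" for k
    unfolding zeta1_def by (intro integral_nonneg_AE) auto
  obtain L where L0: "L \<noteq> 0" and Llim: "(\<lambda>n. zeta1 h PX Pe F (kn n)) \<longlonglongrightarrow> L"
    using zeta_lim by blast
  have "0 \<le> L" using Llim zeta_nn by (intro LIMSEQ_le_const) auto
  with L0 have L: "0 < L" by simp
  define Kc where "Kc = 4 * (Bb + 4 / \<nu>)\<^sup>2 * exp (\<nu> / 2 * Bb)"
  have Kc: "0 \<le> Kc" unfolding Kc_def by simp
  show ?thesis
  proof (intro allI impI)
    fix \<delta> :: real assume \<delta>: "\<delta> > 0"
    define t0 where "t0 = \<delta> * sqrt (L / 2)"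
    have t0: "t0 > 0" unfolding t0_def using \<delta> L by simp
    define \<epsilon> where "\<epsilon> = t0 / (4 * mr + 1)"
    have \<epsilon>: "\<epsilon> > 0" unfolding \<epsilon>_def using t0 mr by simp
    define c0 where "c0 = \<nu> / 4 * t0"
    have c0: "c0 > 0" unfolding c0_def using \<nu> t0 by simp
    let ?Q = "\<lambda>n. (\<integral>z. indicator {z. \<bar>h1 h PX Pe F (kn n) z\<bar> \<ge> \<delta> * sqrt (real n * zeta1 h PX Pe F (kn n))} z
            * (h1 h PX Pe F (kn n) z)\<^sup>2 \<partial>(PZ PX Pe F))"
    have ev1: "eventually (\<lambda>n. L / 2 \<le> zeta1 h PX Pe F (kn n)) sequentially"
    proof -
      have "eventually (\<lambda>n. dist (zeta1 h PX Pe F (kn n)) L < L / 2) sequentially"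
        using Llim L unfolding tendsto_iff by (meson half_gt_zero)
      then show ?thesis
      proof eventually_elim
        case (elim n)
        then have "\<bar>zeta1 h PX Pe F (kn n) - L\<bar> < L / 2" by (simp only: dist_real_def)
        then show ?case by linarith
      qed
    qed
    have ev2: "eventually (\<lambda>n. real (kn n) / sqrt (real n) < \<epsilon>) sequentially"
    proof -
      have "eventually (\<lambda>n. dist (real (kn n) / sqrt (real n)) 0 < \<epsilon>) sequentially"
        using kn_rate \<epsilon> unfolding tendsto_iff by blast
      then show ?thesis by eventually_elim (auto simp: dist_real_def)
    qed
    have ev3: "eventually (\<lambda>n. n \<ge> 1) sequentially" by (rule eventually_ge_at_top)
    have bound: "eventually (\<lambda>n. 0 \<le> (1 / zeta1 h PX Pe F (kn n)) * ?Q n \<and>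
        (1 / zeta1 h PX Pe F (kn n)) * ?Q n \<le> (2 / L * Kc * Ir) * exp (- (c0 * sqrt (real n)))) sequentially"
      using ev1 ev2 ev3
    proof eventually_elim
      case (elim n)
      define k where "k = kn n"
      define \<zeta> where "\<zeta> = zeta1 h PX Pe F k"
      define T where "T = \<delta> * sqrt (real n * \<zeta>)"
      have k: "k \<ge> 1" unfolding k_def by (rule kn_pos)
      have \<zeta>: "L / 2 \<le> \<zeta>" using elim unfolding \<zeta>_def k_def by simp
      have sn: "sqrt (real n) > 0" using elim by simp
      have s1: "sqrt (real n * (L / 2)) \<le> sqrt (real n * \<zeta>)"
        using \<zeta> by (intro real_sqrt_le_mono mult_left_mono) auto
      have s2: "sqrt (real n * (L / 2)) = sqrt (L / 2) * sqrt (real n)"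
        by (simp only: real_sqrt_mult mult.commute)
      have "sqrt (L / 2) * sqrt (real n) \<le> sqrt (real n * \<zeta>)" using s1 s2 by linarith
      then have "\<delta> * (sqrt (L / 2) * sqrt (real n)) \<le> \<delta> * sqrt (real n * \<zeta>)"
        using \<delta> by (intro mult_left_mono) auto
      then have tT: "t0 * sqrt (real n) \<le> T"
        unfolding T_def t0_def by (simp only: mult.assoc)
      have "real k < \<epsilon> * sqrt (real n)" using elim sn unfolding k_def by (simp add: field_simps)
      then have "4 * mr * real k \<le> 4 * mr * (\<epsilon> * sqrt (real n))"
        using mr by (intro mult_left_mono) auto
      also have "\<dots> = (4 * mr / (4 * mr + 1)) * (t0 * sqrt (real n))"
        unfolding \<epsilon>_def by (simp add: field_simps)
      also have "\<dots> \<le> 1 * (t0 * sqrt (real n))"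
        using mr t0 sn by (intro mult_right_mono) auto
      finally have M4: "4 * mr * real k \<le> t0 * sqrt (real n)" by simp
      have "2 * real k * mr = (4 * mr * real k) / 2" by simp
      then have Mle: "2 * real k * mr \<le> T / 2" using M4 tT by linarith
      have T0: "0 \<le> T" using tT t0 sn by (meson less_le_trans mult_pos_pos less_imp_le)
      have pw: "indicator {z. \<bar>h1 h PX Pe F k z\<bar> \<ge> T} z * (h1 h PX Pe F k z)\<^sup>2
          \<le> 4 * indicator {y. T / 2 \<le> \<bar>y\<bar>} (snd z) * (snd z)\<^sup>2" for z
      proof (cases "\<bar>h1 h PX Pe F k z\<bar> \<ge> T")
        case True
        have hb: "\<bar>h1 h PX Pe F k z\<bar> \<le> \<bar>snd z\<bar> + 2 * real k * mr"
          by (rule h1_bound[OF P m mr h_tree k])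
        have y: "T / 2 \<le> \<bar>snd z\<bar>" using True hb Mle by linarith
        have "\<bar>h1 h PX Pe F k z\<bar> \<le> 2 * \<bar>snd z\<bar>" using hb Mle y by linarith
        then have "\<bar>h1 h PX Pe F k z\<bar>\<^sup>2 \<le> (2 * \<bar>snd z\<bar>)\<^sup>2" by (intro power_mono) auto
        then show ?thesis using True y by (simp add: power_mult_distrib)
      qed simp
      have Q0: "0 \<le> ?Q n" by (intro integral_nonneg_AE) auto
      have Qle: "?Q n \<le> Kc * exp (- (\<nu> / 2) * (T / 2)) * Ir"
      proof -
        have "\<bar>?Q n\<bar> \<le> Kc * exp (- (\<nu> / 2) * (T / 2)) * Ir"
        proof (rule abs_integral_le_nn)
          have "(\<integral>\<^sup>+z. ennreal \<bar>indicator {z. \<bar>h1 h PX Pe F (kn n) z\<bar> \<ge> \<delta> * sqrt (real n * zeta1 h PX Pe F (kn n))} z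
            * (h1 h PX Pe F (kn n) z)\<^sup>2\<bar> \<partial>PZ PX Pe F)
            \<le> (\<integral>\<^sup>+z. ennreal (4 * indicator {y. T / 2 \<le> \<bar>y\<bar>} (snd z) * (snd z)\<^sup>2) \<partial>PZ PX Pe F)"
            using pw unfolding T_def \<zeta>_def k_def by (intro nn_integral_mono ennreal_leI) auto
          also have "\<dots> \<le> ennreal (Kc * exp (- (\<nu> / 2) * (T / 2)) * Ir)"
            unfolding Kc_def by (rule tail_PZ[OF PX Pe F_meas Bb \<nu> I Ir])
          finally show "(\<integral>\<^sup>+z. ennreal \<bar>indicator {z. \<bar>h1 h PX Pe F (kn n) z\<bar> \<ge> \<delta> * sqrt (real n * zeta1 h PX Pe F (kn n))} z
            * (h1 h PX Pe F (kn n) z)\<^sup>2\<bar> \<partial>PZ PX Pe F) \<le> ennreal (Kc * exp (- (\<nu> / 2) * (T / 2)) * Ir)" .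
        qed (use Kc Ir in simp)
        then show ?thesis by simp
      qed
      have "\<nu> / 4 * (t0 * sqrt (real n)) \<le> \<nu> / 4 * T"
        using tT \<nu> by (intro mult_left_mono) auto
      then have "- (\<nu> / 2) * (T / 2) \<le> - (c0 * sqrt (real n))"
        unfolding c0_def by (simp only: mult.assoc)
      then have ex: "exp (- (\<nu> / 2) * (T / 2)) \<le> exp (- (c0 * sqrt (real n)))"
        by (simp only: exp_le_cancel_iff)
      have "Kc * exp (- (\<nu> / 2) * (T / 2)) * Ir = (Kc * Ir) * exp (- (\<nu> / 2) * (T / 2))"
        by (simp only: mult_ac)
      also have "\<dots> \<le> (Kc * Ir) * exp (- (c0 * sqrt (real n)))"
        using Kc Ir ex by (intro mult_left_mono) auto
      finally have Qle2: "?Q n \<le> Kc * Ir * exp (- (c0 * sqrt (real n)))"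
        using Qle by linarith
      have z0: "0 < \<zeta>" using \<zeta> L by linarith
      have iz: "1 / \<zeta> \<le> 2 / L" using \<zeta> L by (simp add: field_simps)
      have "(1 / \<zeta>) * ?Q n \<le> (2 / L) * (Kc * Ir * exp (- (c0 * sqrt (real n))))"
        using iz Qle2 Q0 z0 L by (intro mult_mono) auto
      moreover have "(2 / L) * (Kc * Ir * exp (- (c0 * sqrt (real n)))) = (2 / L * Kc * Ir) * exp (- (c0 * sqrt (real n)))"
        by (simp only: mult_ac)
      moreover have "0 \<le> (1 / \<zeta>) * ?Q n" using Q0 z0 by simp
      ultimately show ?case unfolding \<zeta>_def k_def by linarith
    qed
    show "(\<lambda>n. (1 / zeta1 h PX Pe F (kn n)) * ?Q n) \<longlonglongrightarrow> 0"
    proof (rule tendsto_sandwich[OF _ _ tendsto_const exp_sqrt_lim[OF c0]])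
      show "eventually (\<lambda>n. 0 \<le> (1 / zeta1 h PX Pe F (kn n)) * ?Q n) sequentially"
        using bound by eventually_elim auto
      show "eventually (\<lambda>n. (1 / zeta1 h PX Pe F (kn n)) * ?Q n \<le> (2 / L * Kc * Ir) * exp (- (c0 * sqrt (real n)))) sequentially"
        using bound by eventually_elim auto
    qed
  qed
qed

end
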